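(* Let $k\le n$ be positive integers, $x^*\in\mathbb{R}^n$ with support $S^*$, $|S^*|\le k$, $\mathcal{X}^0\in\mathbb{R}^n$ and $\eta>0$. Consider the oracle sequence $(S^t,u^t,\mathcal{X}^t)_{t\ge0}$ and the counts $c^t_i$ defined below. For all $i\in S^*$ and all integers $t\ge1$, $$c^t_i\le\frac{2\|\mathcal{X}^0\|_\infty}{\eta|x^*_i|}+1.$$
   Context: $S^*=\{i:x^*_i\neq0\}$. For $v\in\mathbb{R}^n$, $\mathrm{largest}_k(v)$ is the set of indices of the $k$ entries of $v$ with largest absolute value (ties broken by selecting the highest indices). The oracle sequence is defined for all $t\ge0$ by $S^t=\mathrm{largest}_k(\mathcal{X}^t)$, $u^t_i=-\eta x^*_i$ if $i\in S^*\setminus S^t$ and $u^t_i=0$ otherwise, and $\mathcal{X}^{t+1}=\mathcal{X}^t-u^t$. For $i\in\{1,\dots,n\}$, $c^0_i=0$ and, for $t\ge1$, $c^t_i=|\{t'\in\{0,\dots,t-1\}: i\in S^*\setminus S^{t'}\}|$. *)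

theory Defs
  imports Complex_Main
begin

text \<open>Vectors in R^n are functions nat => real; only the coordinates 1..n matter.\<close>

definition beats :: "(nat \<Rightarrow> real) \<Rightarrow> nat \<Rightarrow> nat \<Rightarrow> bool" where
  "beats v j i \<longleftrightarrow> \<bar>v j\<bar> > \<bar>v i\<bar> \<or> (\<bar>v j\<bar> = \<bar>v i\<bar> \<and> j > i)"

text \<open>largest_k v: the k indices in 1..n of largest absolute value (ties: highest indices).\<close>
definition largest :: "nat \<Rightarrow> nat \<Rightarrow> (nat \<Rightarrow> real) \<Rightarrow> nat set" where
  "largest n k v = {i \<in> {1..n}. card {j \<in> {1..n}. beats v j i} < k}"

definition supp :: "nat \<Rightarrow> (nat \<Rightarrow> real) \<Rightarrow> nat set" where
  "supp n x = {i \<in> {1..n}. x i \<noteq> 0}"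

definition norm_inf :: "nat \<Rightarrow> (nat \<Rightarrow> real) \<Rightarrow> real" where
  "norm_inf n x = Max ((\<lambda>i. \<bar>x i\<bar>) ` {1..n})"

definition oracle_u :: "nat \<Rightarrow> real \<Rightarrow> (nat \<Rightarrow> real) \<Rightarrow> nat set \<Rightarrow> nat \<Rightarrow> real" where
  "oracle_u n \<eta> xs S i = (if i \<in> supp n xs - S then - \<eta> * xs i else 0)"

fun oracle_X :: "nat \<Rightarrow> nat \<Rightarrow> real \<Rightarrow> (nat \<Rightarrow> real) \<Rightarrow> (nat \<Rightarrow> real) \<Rightarrow> nat \<Rightarrow> (nat \<Rightarrow> real)" where
  "oracle_X n k \<eta> xs X0 0 = X0"
| "oracle_X n k \<eta> xs X0 (Suc t) =
     (\<lambda>i. oracle_X n k \<eta> xs X0 t i - oracle_u n \<eta> xs (largest n k (oracle_X n k \<eta> xs X0 t)) i)"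

definition oracle_S :: "nat \<Rightarrow> nat \<Rightarrow> real \<Rightarrow> (nat \<Rightarrow> real) \<Rightarrow> (nat \<Rightarrow> real) \<Rightarrow> nat \<Rightarrow> nat set" where
  "oracle_S n k \<eta> xs X0 t = largest n k (oracle_X n k \<eta> xs X0 t)"

definition oracle_c :: "nat \<Rightarrow> nat \<Rightarrow> real \<Rightarrow> (nat \<Rightarrow> real) \<Rightarrow> (nat \<Rightarrow> real) \<Rightarrow> nat \<Rightarrow> nat \<Rightarrow> nat" where
  "oracle_c n k \<eta> xs X0 t i = card {t' \<in> {0..<t}. i \<in> supp n xs - oracle_S n k \<eta> xs X0 t'}"

end

theory Submission
  imports Defs
begin

lemma card_step:
  "card {t' \<in> {0..<Suc t}. P t'} = card {t' \<in> {0..<t}. P t'} + (if P t then 1 else 0)"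
proof -
  have "{t' \<in> {0..<Suc t}. P t'} = (if P t then insert t {t' \<in> {0..<t}. P t'} else {t' \<in> {0..<t}. P t'})"
    by (auto simp: less_Suc_eq)
  then show ?thesis by simp
qed

lemma c_Suc:
  "oracle_c n k \<eta> xs X0 (Suc t) i = oracle_c n k \<eta> xs X0 t i +
     (if i \<in> supp n xs - oracle_S n k \<eta> xs X0 t then 1 else 0)"
  unfolding oracle_c_def by (rule card_step)

lemma X_formula:
  "oracle_X n k \<eta> xs X0 t i = X0 i + \<eta> * xs i * real (oracle_c n k \<eta> xs X0 t i)"
proof (induction t)
  case 0
  then show ?case by (simp add: oracle_c_def)
next
  case (Suc t)
  show ?case using Suc
    by (simp add: c_Suc oracle_u_def oracle_S_def algebra_simps)
qed

lemma beats_le: "beats v j i \<Longrightarrow> \<bar>v i\<bar> \<le> \<bar>v j\<bar>"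
  unfolding beats_def by auto

lemma exists_beater:
  assumes "i \<notin> largest n k v" "i \<in> {1..n}" "card (supp n xs) \<le> k" "i \<in> supp n xs"
  shows "\<exists>j\<in>{1..n}. j \<notin> supp n xs \<and> beats v j i"
proof (rule ccontr)
  assume H: "\<not> ?thesis"
  let ?A = "{j \<in> {1..n}. beats v j i}"
  have kA: "card ?A \<ge> k" using assms(1,2) unfolding largest_def by auto
  have "?A \<subseteq> supp n xs - {i}" using H by (auto simp: beats_def)
  moreover have "finite (supp n xs)" unfolding supp_def by auto
  ultimately have "card ?A \<le> card (supp n xs - {i})" by (intro card_mono) auto
  also have "\<dots> = card (supp n xs) - 1" using assms(4) by simp
  finally have "card ?A \<le> card (supp n xs) - 1" .
  moreover have "card (supp n xs) > 0" using assms(4) \<open>finite (supp n xs)\<close>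
    by (auto simp: card_gt_0_iff)
  ultimately show False using kA assms(3) by linarith
qed

theorem lemmaC3:
  fixes n k :: nat and xs X0 :: "nat \<Rightarrow> real" and \<eta> :: real and i t :: nat
  assumes "0 < k" and "k \<le> n"
    and "card (supp n xs) \<le> k"
    and "\<eta> > 0"
    and "i \<in> supp n xs"
    and "t \<ge> 1"
  shows "real (oracle_c n k \<eta> xs X0 t i) \<le> 2 * norm_inf n X0 / (\<eta> * \<bar>xs i\<bar>) + 1"
proof -
  define M where "M = norm_inf n X0"
  have iin: "i \<in> {1..n}" and xi: "xs i \<noteq> 0" using assms(5) unfolding supp_def by auto
  have Mb: "\<And>j. j \<in> {1..n} \<Longrightarrow> \<bar>X0 j\<bar> \<le> M"
    unfolding M_def norm_inf_def by (rule Max_ge) auto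
  have M0: "0 \<le> M" using Mb[OF iin] by linarith
  have pos: "\<eta> * \<bar>xs i\<bar> > 0" using assms(4) xi by simp
  define B where "B = 2 * M / (\<eta> * \<bar>xs i\<bar>)"
  have B0: "0 \<le> B" unfolding B_def using M0 pos by simp
  have key: "real (oracle_c n k \<eta> xs X0 s i) \<le> B"
    if ns: "i \<notin> oracle_S n k \<eta> xs X0 s" for s
  proof -
    let ?v = "oracle_X n k \<eta> xs X0 s"
    let ?c = "real (oracle_c n k \<eta> xs X0 s i)"
    obtain j where j: "j \<in> {1..n}" "j \<notin> supp n xs" "beats ?v j i"
      using exists_beater[OF ns[unfolded oracle_S_def] iin assms(3,5)] by blast
    have xj: "xs j = 0" using j(1,2) unfolding supp_def by auto
    have vj: "?v j = X0 j" using X_formula[of n k \<eta> xs X0 s j] xj by simp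
    have "\<bar>?v i\<bar> \<le> M" using beats_le[OF j(3)] vj Mb[OF j(1)] by simp
    moreover have "?v i = X0 i + \<eta> * xs i * ?c" by (rule X_formula)
    moreover have "\<bar>\<eta> * xs i * ?c\<bar> = \<eta> * \<bar>xs i\<bar> * ?c" using assms(4)
      by (simp add: abs_mult)
    ultimately have "\<eta> * \<bar>xs i\<bar> * ?c \<le> 2 * M" using Mb[OF iin] by linarith
    then show ?thesis unfolding B_def using pos by (simp add: field_simps)
  qed
  have "real (oracle_c n k \<eta> xs X0 s i) \<le> B + 1" for s
  proof (induction s)
    case 0 then show ?case using B0 by (simp add: oracle_c_def)
  next
    case (Suc s)
    show ?case
    proof (cases "i \<in> supp n xs - oracle_S n k \<eta> xs X0 s")
      case True
      then have "real (oracle_c n k \<eta> xs X0 s i) \<le> B" using key by blast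
      then show ?thesis using True by (simp add: c_Suc)
    next
      case False then show ?thesis
        by (subst c_Suc, subst if_not_P[OF False], simp add: Suc)
    qed
  qed
  then show ?thesis unfolding B_def M_def by blast
qed

end
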